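(* Let $R>1$ and let $f,g:\mathbb{D}_{R}\to\mathbb{C}$ be analytic in $\mathbb{D}_{R}=\{z\in\mathbb{C}:|z|<R\}$, $f(z)=\sum_{k=0}^{\infty}a_{k}z^{k}$, $g(z)=\sum_{k=0}^{\infty}b_{k}z^{k}$ for $z\in\mathbb{D}_{R}$. Let $1\le r<R$. Then $\sum_{m=0}^{\infty}m^{2}\big[\sum_{j=0}^{m}|a_{j}||b_{m-j}|\big]r^{m-1}<+\infty$ and for all $n\in\mathbb{N}$, $$\|B_{n}(fg)-B_{n}(f)B_{n}(g)\|_{r}\le\frac{6(1+r)}{n}\sum_{m=0}^{\infty}m^{2}\Big[\sum_{j=0}^{m}|a_{j}||b_{m-j}|\Big]r^{m-1}.$$
   Context: For a function $h$ defined on $[0,1]$ (here the restriction of an analytic function), the complex Bernstein polynomials are $B_{n}(h)(z)=\sum_{k=0}^{n}\binom{n}{k}z^{k}(1-z)^{n-k}h(k/n)$, $z\in\mathbb{C}$. For $h$ continuous on $\{|z|\le r\}$, $\|h\|_{r}=\max\{|h(z)|:|z|\le r\}$. *)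

theory Defs
  imports "HOL-Analysis.Analysis"
begin

definition bernstein :: "nat \<Rightarrow> (complex \<Rightarrow> complex) \<Rightarrow> complex \<Rightarrow> complex" where
  "bernstein n h z = (\<Sum>k=0..n. of_nat (n choose k) * z ^ k * (1 - z) ^ (n - k)
                          * h (complex_of_real (real k / real n)))"

definition disc_norm :: "real \<Rightarrow> (complex \<Rightarrow> complex) \<Rightarrow> real" where
  "disc_norm r h = (SUP z\<in>cball 0 r. norm (h z))"

end

theory Submission imports Defs "HOL-Combinatorics.Stirling" begin


fun ff :: "nat \<Rightarrow> nat \<Rightarrow> nat" where
  "ff x 0 = 1" | "ff x (Suc j) = x * ff (x - 1) j"

lemma ff_Suc': "ff x (Suc j) = ff x j * (x - j)"
proof (induction j arbitrary: x)
  case 0 then show ?case by simp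
next
  case (Suc j)
  have "ff x (Suc (Suc j)) = x * ff (x - 1) (Suc j)" by (simp only: ff.simps)
  also have "\<dots> = x * (ff (x - 1) j * (x - 1 - j))" using Suc.IH[of "x-1"] by simp
  also have "\<dots> = ff x (Suc j) * (x - Suc j)" by (simp only: ff.simps mult.assoc) simp
  finally show ?case .
qed

lemma ff_zero: "x < j \<Longrightarrow> ff x j = 0"
proof (induction j arbitrary: x)
  case 0 then show ?case by simp
next
  case (Suc j)
  show ?case
  proof (cases x)
    case 0 then show ?thesis by (simp only: ff.simps)
  next
    case (Suc y)
    then have "y < j" using Suc.prems by simp
    then show ?thesis using Suc.IH[of y] \<open>x = Suc y\<close> by (simp only: ff.simps) simp
  qed
qed

lemma x_ff: "x * ff x j = ff x (Suc j) + j * ff x j"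
proof (cases "j \<le> x")
  case True
  then show ?thesis by (simp only: ff_Suc') (metis add_mult_distrib2 le_add_diff_inverse2 mult.commute)
next
  case False
  then show ?thesis by (simp add: ff_zero)
qed

lemma pow_stirling: "x ^ p = (\<Sum>j\<le>p. Stirling p j * ff x j)"
proof (induction p)
  case 0
  then show ?case by simp
next
  case (Suc p)
  have "x ^ Suc p = (\<Sum>j\<le>p. Stirling p j * (x * ff x j))"
    by (simp add: Suc sum_distrib_left algebra_simps)
  also have "\<dots> = (\<Sum>j\<le>p. Stirling p j * ff x (Suc j)) + (\<Sum>j\<le>p. j * Stirling p j * ff x j)"
    by (simp add: x_ff algebra_simps sum.distrib)
  also have "(\<Sum>j\<le>p. j * Stirling p j * ff x j) = (\<Sum>j\<le>p. Suc j * Stirling p (Suc j) * ff x (Suc j))"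
  proof -
    have "(\<Sum>j\<le>Suc p. j * Stirling p j * ff x j) = (\<Sum>j\<le>p. Suc j * Stirling p (Suc j) * ff x (Suc j))"
      by (subst sum.atMost_Suc_shift) simp
    then show ?thesis by simp
  qed
  also have "(\<Sum>j\<le>p. Stirling p j * ff x (Suc j)) + (\<Sum>j\<le>p. Suc j * Stirling p (Suc j) * ff x (Suc j))
     = (\<Sum>j\<le>p. Stirling (Suc p) (Suc j) * ff x (Suc j))"
    by (simp add: sum.distrib[symmetric] algebra_simps)
  also have "\<dots> = (\<Sum>j\<le>Suc p. Stirling (Suc p) j * ff x j)"
    by (subst sum.atMost_Suc_shift) simp
  finally show ?case .
qed


lemma bern_ff:
  fixes z :: complex
  shows "(\<Sum>k\<le>n. of_nat (n choose k) * of_nat (ff k j) * z ^ k * (1 - z) ^ (n - k)) = of_nat (ff n j) * z ^ j"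
proof (induction j arbitrary: n)
  case 0
  have "(\<Sum>k\<le>n. of_nat (n choose k) * z ^ k * (1 - z) ^ (n - k)) = (z + (1 - z)) ^ n"
    by (rule binomial_ring[symmetric])
  then show ?case by simp
next
  case (Suc j)
  show ?case
  proof (cases n)
    case 0 then show ?thesis by simp
  next
    case (Suc m)
    have "(\<Sum>k\<le>Suc m. of_nat (Suc m choose k) * of_nat (ff k (Suc j)) * z ^ k * (1 - z) ^ (Suc m - k))
      = (\<Sum>i\<le>m. of_nat (Suc m choose Suc i) * of_nat (ff (Suc i) (Suc j)) * z ^ Suc i * (1 - z) ^ (m - i))"
      by (subst sum.atMost_Suc_shift) simp
    also have "\<dots> = (\<Sum>i\<le>m. of_nat (Suc m) * z * (of_nat (m choose i) * of_nat (ff i j) * z ^ i * (1 - z) ^ (m - i)))"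
    proof (rule sum.cong[OF refl])
      fix i
      have "(Suc m choose Suc i) * ff (Suc i) (Suc j) = Suc m * (m choose i) * ff i j"
      proof -
        have "(Suc m choose Suc i) * ff (Suc i) (Suc j) = (Suc i * (Suc m choose Suc i)) * ff i j"
          by (simp only: ff.simps diff_Suc_1 ac_simps)
        also have "\<dots> = Suc m * (m choose i) * ff i j" by (simp only: Suc_times_binomial)
        finally show ?thesis .
      qed
      then have "(of_nat (Suc m choose Suc i) * of_nat (ff (Suc i) (Suc j)) :: complex) = of_nat (Suc m) * of_nat (m choose i) * of_nat (ff i j)"
        by (metis of_nat_mult)
      then show "of_nat (Suc m choose Suc i) * of_nat (ff (Suc i) (Suc j)) * z ^ Suc i * (1 - z) ^ (m - i) =
         of_nat (Suc m) * z * (of_nat (m choose i) * of_nat (ff i j) * z ^ i * (1 - z) ^ (m - i))"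
        by (simp add: algebra_simps)
    qed
    also have "\<dots> = of_nat (Suc m) * z * (of_nat (ff m j) * z ^ j)"
      by (simp add: sum_distrib_left[symmetric] Suc.IH)
    also have "\<dots> = of_nat (ff (Suc m) (Suc j)) * z ^ Suc j"
      by (simp add: algebra_simps)
    finally show ?thesis using Suc by simp
  qed
qed


declare ff.simps(2)[simp del]

lemma ff_le_pow: "ff n p \<le> n ^ p"
proof (induction p)
  case (Suc p)
  have "ff n p * (n - p) \<le> n ^ p * n" using Suc by (intro mult_le_mono) auto
  then show ?case by (simp add: ff_Suc' mult.commute)
qed simp

lemma ff_Suc_ge: "real (ff n (Suc p)) \<ge> real (ff n p) * (real n - real p)"
proof (cases "p \<le> n")
  case True then show ?thesis by (simp add: ff_Suc' of_nat_diff)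
next
  case False then show ?thesis by (simp add: ff_zero)
qed

lemma ff_ineq: "2 * real n * (real n ^ p - real (ff n p)) \<le> real p * (real p - 1) * real n ^ p"
proof (induction p)
  case 0 then show ?case by simp
next
  case (Suc p)
  define F where "F = real (ff n p)"
  define N where "N = real n"
  have F0: "0 \<le> F" and FN: "F \<le> N ^ p" unfolding F_def N_def
    using ff_le_pow[of n p] by (auto simp del: of_nat_power simp: of_nat_power[symmetric])
  have N0: "0 \<le> N" unfolding N_def by simp
  have IH: "2 * N * (N ^ p - F) \<le> real p * (real p - 1) * N ^ p" using Suc.IH unfolding F_def N_def .
  have G: "real (ff n (Suc p)) \<ge> F * (N - real p)" using ff_Suc_ge unfolding F_def N_def .
  have "2 * N * (N ^ Suc p - real (ff n (Suc p))) \<le> 2 * N * (N * N ^ p - F * (N - real p))"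
    using G N0 by (intro mult_left_mono) auto
  also have "\<dots> = N * (2 * N * (N ^ p - F)) + 2 * N * real p * F" by (simp add: algebra_simps)
  also have "\<dots> \<le> N * (real p * (real p - 1) * N ^ p) + 2 * N * real p * N ^ p"
    by (intro add_mono mult_left_mono IH) (use N0 FN in auto)
  also have "\<dots> = real (Suc p) * (real (Suc p) - 1) * N ^ Suc p" by (simp add: algebra_simps)
  finally show ?case unfolding N_def by simp
qed

lemma moment_eq:
  fixes z :: complex
  shows "(\<Sum>k\<le>n. of_nat (n choose k) * z ^ k * (1 - z) ^ (n - k) * of_nat k ^ p)
    = (\<Sum>j\<le>p. of_nat (Stirling p j * ff n j) * z ^ j)"
proof -
  have "(\<Sum>k\<le>n. of_nat (n choose k) * z ^ k * (1 - z) ^ (n - k) * of_nat k ^ p)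
      = (\<Sum>k\<le>n. \<Sum>j\<le>p. of_nat (Stirling p j) * (of_nat (n choose k) * of_nat (ff k j) * z ^ k * (1 - z) ^ (n - k)))"
  proof (rule sum.cong[OF refl])
    fix k
    have "(of_nat k ^ p :: complex) = of_nat (k ^ p)" by simp
    also have "\<dots> = (\<Sum>j\<le>p. of_nat (Stirling p j) * of_nat (ff k j))"
      by (subst pow_stirling) simp
    finally show "of_nat (n choose k) * z ^ k * (1 - z) ^ (n - k) * of_nat k ^ p =
       (\<Sum>j\<le>p. of_nat (Stirling p j) * (of_nat (n choose k) * of_nat (ff k j) * z ^ k * (1 - z) ^ (n - k)))"
      by (simp add: sum_distrib_left sum_distrib_right algebra_simps)
  qed
  also have "\<dots> = (\<Sum>j\<le>p. of_nat (Stirling p j) * (\<Sum>k\<le>n. of_nat (n choose k) * of_nat (ff k j) * z ^ k * (1 - z) ^ (n - k)))"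
    by (subst sum.swap) (simp add: sum_distrib_left)
  also have "\<dots> = (\<Sum>j\<le>p. of_nat (Stirling p j * ff n j) * z ^ j)"
    using bern_ff[of n _ z] by (simp add: mult.assoc)
  finally show ?thesis .
qed


definition mom :: "nat \<Rightarrow> complex \<Rightarrow> nat \<Rightarrow> complex" where
  "mom n z p = (\<Sum>k\<le>n. of_nat (n choose k) * z ^ k * (1 - z) ^ (n - k) * (of_nat k / of_nat n) ^ p)"

lemma mom_alt: "mom n z p = (\<Sum>j\<le>p. of_real (real (Stirling p j * ff n j)) * z ^ j) / of_nat n ^ p"
proof -
  have "mom n z p = (\<Sum>k\<le>n. of_nat (n choose k) * z ^ k * (1 - z) ^ (n - k) * of_nat k ^ p) / of_nat n ^ p"
    unfolding mom_def by (simp add: sum_divide_distrib power_divide)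
  also have "\<dots> = (\<Sum>j\<le>p. of_real (real (Stirling p j * ff n j)) * z ^ j) / of_nat n ^ p"
    by (simp only: moment_eq) simp
  finally show ?thesis .
qed

lemma mom_bounds:
  fixes z :: complex
  assumes n: "n \<ge> 1" and r: "1 \<le> r" and z: "norm z \<le> r"
  shows "norm (mom n z p) \<le> r ^ p"
    and "norm (mom n z p - z ^ p) \<le> real p * (real p - 1) / real n * r ^ p"
proof -
  define c where "c j = real (Stirling p j * ff n j)" for j
  define N where "N = real n"
  have N1: "N \<ge> 1" using n unfolding N_def by simp
  have c0: "c j \<ge> 0" for j unfolding c_def by simp
  have csum: "(\<Sum>j\<le>p. c j) = N ^ p"
  proof -
    have "real (n ^ p) = real (\<Sum>j\<le>p. Stirling p j * ff n j)" by (subst pow_stirling) simp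
    then show ?thesis unfolding c_def N_def by simp
  qed
  have cp: "c p = real (ff n p)" unfolding c_def by simp
  have zj: "norm z ^ j \<le> r ^ p" if "j \<le> p" for j
  proof -
    have "norm z ^ j \<le> r ^ j" by (intro power_mono z) simp
    also have "\<dots> \<le> r ^ p" using that r by (intro power_increasing) auto
    finally show ?thesis .
  qed
  have momeq: "mom n z p = (\<Sum>j\<le>p. of_real (c j) * z ^ j) / of_real (N ^ p)"
    unfolding mom_alt c_def N_def by simp
  have Np: "N ^ p > 0" using N1 by simp
  have "norm (\<Sum>j\<le>p. of_real (c j) * z ^ j) \<le> (\<Sum>j\<le>p. c j * r ^ p)"
  proof -
    have "norm (\<Sum>j\<le>p. of_real (c j) * z ^ j) \<le> (\<Sum>j\<le>p. norm (of_real (c j) * z ^ j))"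
      by (rule norm_sum)
    also have "\<dots> \<le> (\<Sum>j\<le>p. c j * r ^ p)"
      by (intro sum_mono) (simp add: norm_mult norm_power c0 mult_left_mono zj)
    finally show ?thesis .
  qed
  also have "\<dots> = N ^ p * r ^ p" by (simp add: sum_distrib_right[symmetric] csum)
  finally have A: "norm (\<Sum>j\<le>p. of_real (c j) * z ^ j) \<le> N ^ p * r ^ p" .
  show "norm (mom n z p) \<le> r ^ p"
  proof -
    have "norm (of_real (N ^ p) :: complex) = N ^ p" using Np by (simp only: norm_of_real abs_of_pos)
    then have "norm (mom n z p) = norm (\<Sum>j\<le>p. of_real (c j) * z ^ j) / N ^ p"
      unfolding momeq by (simp only: norm_divide)
    then show ?thesis using A Np by (simp add: divide_le_eq mult.commute)
  qed
  have split: "(\<Sum>j\<le>p. of_real (c j) * z ^ j) - of_real (N ^ p) * z ^ p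
      = (\<Sum>j<p. of_real (c j) * z ^ j) - of_real (N ^ p - c p) * z ^ p"
    by (simp add: lessThan_Suc_atMost[symmetric] algebra_simps)
  have csum2: "(\<Sum>j<p. c j) = N ^ p - c p"
    using csum by (simp add: lessThan_Suc_atMost[symmetric])
  have cpN: "c p \<le> N ^ p" using ff_le_pow[of n p] unfolding cp N_def
    by (simp del: of_nat_power add: of_nat_power[symmetric])
  have "norm ((\<Sum>j<p. of_real (c j) * z ^ j) - of_real (N ^ p - c p) * z ^ p)
      \<le> (\<Sum>j<p. c j * r ^ p) + (N ^ p - c p) * r ^ p"
  proof -
    have "norm (\<Sum>j<p. of_real (c j) * z ^ j) \<le> (\<Sum>j<p. norm (of_real (c j) * z ^ j))"
      by (rule norm_sum)
    also have "\<dots> \<le> (\<Sum>j<p. c j * r ^ p)"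
      by (intro sum_mono) (simp add: norm_mult norm_power c0 mult_left_mono zj)
    finally have 1: "norm (\<Sum>j<p. of_real (c j) * z ^ j) \<le> (\<Sum>j<p. c j * r ^ p)" .
    have 2: "norm (of_real (N ^ p - c p) * z ^ p :: complex) \<le> (N ^ p - c p) * r ^ p"
    proof -
      have "norm (of_real (N ^ p - c p) * z ^ p :: complex) = (N ^ p - c p) * norm z ^ p"
        using cpN by (simp only: norm_mult norm_of_real norm_power abs_of_nonneg)
      also have "\<dots> \<le> (N ^ p - c p) * r ^ p"
        using cpN by (intro mult_left_mono power_mono z) auto
      finally show ?thesis .
    qed
    show ?thesis using norm_triangle_ineq4[of "\<Sum>j<p. of_real (c j) * z ^ j" "of_real (N ^ p - c p) * z ^ p"] 1 2
      by linarith
  qed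
  also have "\<dots> = 2 * (N ^ p - c p) * r ^ p"
    by (simp add: sum_distrib_right[symmetric] csum2)
  finally have B: "norm ((\<Sum>j\<le>p. of_real (c j) * z ^ j) - of_real (N ^ p) * z ^ p) \<le> 2 * (N ^ p - c p) * r ^ p"
    by (simp only: split)
  have "mom n z p - z ^ p = ((\<Sum>j\<le>p. of_real (c j) * z ^ j) - of_real (N ^ p) * z ^ p) / of_real (N ^ p)"
  proof -
    have ne: "(of_real (N ^ p) :: complex) \<noteq> 0" using N1 by simp
    show ?thesis unfolding momeq diff_divide_distrib using ne by simp
  qed
  then have "norm (mom n z p - z ^ p) \<le> 2 * (N ^ p - c p) * r ^ p / N ^ p"
  proof -
    have nN: "norm (of_real (N ^ p) :: complex) = N ^ p" using Np by (simp only: norm_of_real abs_of_pos)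
    show ?thesis unfolding \<open>mom n z p - z ^ p = _\<close> norm_divide nN
      using B Np by (intro divide_right_mono) auto
  qed
  also have "\<dots> \<le> real p * (real p - 1) / N * r ^ p"
  proof -
    have I: "2 * N * (N ^ p - c p) \<le> real p * (real p - 1) * N ^ p"
      using ff_ineq[of n p] unfolding cp N_def .
    have "2 * (N ^ p - c p) / N ^ p = (2 * N * (N ^ p - c p)) / (N * N ^ p)"
      using N1 by simp
    also have "\<dots> \<le> (real p * (real p - 1) * N ^ p) / (N * N ^ p)"
      using I Np N1 by (intro divide_right_mono) auto
    also have "\<dots> = real p * (real p - 1) / N" using Np by simp
    finally have X: "2 * (N ^ p - c p) / N ^ p \<le> real p * (real p - 1) / N" .
    have "2 * (N ^ p - c p) * r ^ p / N ^ p = (2 * (N ^ p - c p) / N ^ p) * r ^ p" by simp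
    also have "\<dots> \<le> real p * (real p - 1) / N * r ^ p"
      using X r by (intro mult_right_mono) auto
    finally show ?thesis .
  qed
  finally show "norm (mom n z p - z ^ p) \<le> real p * (real p - 1) / real n * r ^ p" unfolding N_def .
qed


lemma D_bound:
  fixes z :: complex
  assumes n: "n \<ge> 1" and r: "1 \<le> r" and z: "norm z \<le> r" and jm: "j \<le> m"
  shows "norm (mom n z m - mom n z j * mom n z (m - j)) \<le> 3 * real m ^ 2 * r ^ m / real n"
proof -
  define l where "l = m - j"
  have ml: "m = j + l" using jm unfolding l_def by simp
  define E where "E p = mom n z p - z ^ p" for p
  have Eb: "norm (E p) \<le> real p ^ 2 / real n * r ^ p" for p
  proof -
    have "norm (E p) \<le> real p * (real p - 1) / real n * r ^ p" unfolding E_def by (rule mom_bounds(2)[OF n r z])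
    also have "\<dots> \<le> real p ^ 2 / real n * r ^ p"
      proof -
      have "real p * (real p - 1) \<le> real p ^ 2" by (simp add: power2_eq_square algebra_simps)
      then have "real p * (real p - 1) / real n \<le> real p ^ 2 / real n" by (rule divide_right_mono) simp
      then show ?thesis using r by (intro mult_right_mono) auto
    qed
    finally show ?thesis .
  qed
  have Pb: "norm (mom n z p) \<le> r ^ p" for p by (rule mom_bounds(1)[OF n r z])
  have zb: "norm (z ^ p) \<le> r ^ p" for p by (simp add: norm_power power_mono z)
  have eq: "mom n z m - mom n z j * mom n z l = E m - E j * mom n z l - z ^ j * E l"
    unfolding E_def ml by (simp add: power_add algebra_simps)
  have "norm (E m - E j * mom n z l - z ^ j * E l) \<le> norm (E m) + norm (E j) * norm (mom n z l) + norm (z ^ j) * norm (E l)"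
  proof -
    have "norm (E m - E j * mom n z l - z ^ j * E l) \<le> norm (E m - E j * mom n z l) + norm (z ^ j * E l)"
      by (rule norm_triangle_ineq4)
    also have "\<dots> \<le> norm (E m) + norm (E j * mom n z l) + norm (z ^ j * E l)"
      using norm_triangle_ineq4[of "E m" "E j * mom n z l"] by linarith
    finally show ?thesis by (simp only: norm_mult)
  qed
  also have "\<dots> \<le> real m ^ 2 / real n * r ^ m + (real j ^ 2 / real n * r ^ j) * r ^ l + r ^ j * (real l ^ 2 / real n * r ^ l)"
    using r by (intro add_mono mult_mono Eb Pb zb) auto
  also have "\<dots> = (real m ^ 2 + real j ^ 2 + real l ^ 2) * r ^ m / real n"
    unfolding ml by (simp add: power_add algebra_simps add_divide_distrib)
  also have "\<dots> \<le> (3 * real m ^ 2) * r ^ m / real n"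
  proof -
    have h1: "real j ^ 2 \<le> real m ^ 2" by (rule power_mono) (use ml in auto)
    have h2: "real l ^ 2 \<le> real m ^ 2" by (rule power_mono) (use ml in auto)
    have "real m ^ 2 + real j ^ 2 + real l ^ 2 \<le> 3 * real m ^ 2" using h1 h2 by linarith
    then have "(real m ^ 2 + real j ^ 2 + real l ^ 2) * r ^ m \<le> (3 * real m ^ 2) * r ^ m"
      using r by (intro mult_right_mono) auto
    then show ?thesis by (rule divide_right_mono) simp
  qed
  finally have "norm (mom n z m - mom n z j * mom n z l) \<le> 3 * real m ^ 2 * r ^ m / real n" by (simp only: eq)
  then show ?thesis unfolding l_def .
qed



lemma summ_abs:
  fixes e :: "nat \<Rightarrow> complex" and x :: complex
  assumes S: "\<And>z. z \<in> ball 0 R \<Longrightarrow> (\<lambda>k. e k * z ^ k) sums F z" and x: "norm x < R"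
  shows "summable (\<lambda>p. norm (e p) * norm x ^ p)"
proof -
  define \<rho> where "\<rho> = (norm x + R) / 2"
  have r0: "0 \<le> \<rho>" "\<rho> < R" "norm x < \<rho>"
  proof -
    have "0 \<le> norm x" by simp
    then have "0 \<le> norm x + R" using x by linarith
    then show "0 \<le> \<rho>" unfolding \<rho>_def by simp
    show "\<rho> < R" using x unfolding \<rho>_def by simp
    show "norm x < \<rho>" using x unfolding \<rho>_def by simp
  qed
  have "complex_of_real \<rho> \<in> ball 0 R" using r0 by simp
  then have "summable (\<lambda>k. e k * complex_of_real \<rho> ^ k)" using S sums_summable by blast
  moreover have "norm x < norm (complex_of_real \<rho>)" using r0 by simp
  ultimately have "summable (\<lambda>n. norm (e n * x ^ n))" by (rule powser_insidea)
  then show ?thesis by (simp add: norm_mult norm_power)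
qed

lemma bern_sums:
  fixes e :: "nat \<Rightarrow> complex" and z :: complex
  assumes R: "R > 1" and S: "\<And>z. z \<in> ball 0 R \<Longrightarrow> (\<lambda>k. e k * z ^ k) sums F z"
  shows "(\<lambda>p. e p * mom n z p) sums bernstein n F z"
proof -
  define w where "w k = of_nat (n choose k) * z ^ k * (1 - z) ^ (n - k)" for k
  define x where "x k = (of_nat k / of_nat n :: complex)" for k
  have xr: "complex_of_real (real k / real n) = x k" for k unfolding x_def by simp
  have "(\<lambda>p. w k * (e p * x k ^ p)) sums (w k * F (x k))" if "k \<in> {0..n}" for k
  proof -
    have "norm (x k) \<le> 1"
    proof (cases "n = 0")
      case False then show ?thesis using that unfolding x_def by (simp add: norm_divide)
    qed (simp add: x_def)
    then have "x k \<in> ball 0 R" using R by simp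
    then show ?thesis by (intro sums_mult S)
  qed
  then have "(\<lambda>p. \<Sum>k\<in>{0..n}. w k * (e p * x k ^ p)) sums (\<Sum>k\<in>{0..n}. w k * F (x k))"
    by (rule sums_sum)
  moreover have "(\<Sum>k\<in>{0..n}. w k * (e p * x k ^ p)) = e p * mom n z p" for p
  proof -
    have "(\<Sum>k\<in>{0..n}. w k * (e p * x k ^ p)) = e p * (\<Sum>k\<in>{0..n}. w k * x k ^ p)"
      by (simp add: sum_distrib_left mult.left_commute)
    also have "(\<Sum>k\<in>{0..n}. w k * x k ^ p) = mom n z p"
      unfolding mom_def w_def x_def atLeast0AtMost ..
    finally show ?thesis .
  qed
  moreover have "(\<Sum>k\<in>{0..n}. w k * F (x k)) = bernstein n F z"
    unfolding bernstein_def w_def xr ..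
  ultimately show ?thesis by simp
qed

lemma prod_sums:
  fixes a b :: "nat \<Rightarrow> complex"
  assumes Sa: "\<And>z. z \<in> ball 0 R \<Longrightarrow> (\<lambda>k. a k * z ^ k) sums f z"
    and Sb: "\<And>z. z \<in> ball 0 R \<Longrightarrow> (\<lambda>k. b k * z ^ k) sums g z"
    and z: "z \<in> ball 0 R"
  shows "(\<lambda>m. (\<Sum>i\<le>m. a i * b (m - i)) * z ^ m) sums (f z * g z)"
proof -
  have na: "summable (\<lambda>k. norm (a k * z ^ k))" using summ_abs[OF Sa, where x=z] z by (simp add: norm_mult norm_power)
  have nb: "summable (\<lambda>k. norm (b k * z ^ k))" using summ_abs[OF Sb, where x=z] z by (simp add: norm_mult norm_power)
  have "(\<lambda>m. \<Sum>i\<le>m. a i * z ^ i * (b (m - i) * z ^ (m - i))) sums ((\<Sum>k. a k * z ^ k) * (\<Sum>k. b k * z ^ k))"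
    by (rule Cauchy_product_sums[OF na nb])
  moreover have "(\<Sum>k. a k * z ^ k) = f z" using Sa[OF z] by (simp add: sums_iff)
  moreover have "(\<Sum>k. b k * z ^ k) = g z" using Sb[OF z] by (simp add: sums_iff)
  moreover have "(\<Sum>i\<le>m. a i * z ^ i * (b (m - i) * z ^ (m - i))) = (\<Sum>i\<le>m. a i * b (m - i)) * z ^ m" for m
  proof -
    have "a i * z ^ i * (b (m - i) * z ^ (m - i)) = a i * b (m - i) * z ^ m" if "i \<in> {..m}" for i
    proof -
      have "z ^ i * z ^ (m - i) = z ^ m" using that by (simp flip: power_add)
      then show ?thesis by (metis mult.assoc mult.left_commute)
    qed
    then have "(\<Sum>i\<le>m. a i * z ^ i * (b (m - i) * z ^ (m - i))) = (\<Sum>i\<le>m. a i * b (m - i) * z ^ m)"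
      by (rule sum.cong[OF refl])
    then show ?thesis by (simp add: sum_distrib_right)
  qed
  ultimately show ?thesis by simp
qed



theorem theorem4p1:
  fixes R r :: real and f g :: "complex \<Rightarrow> complex" and a b :: "nat \<Rightarrow> complex"
  assumes "R > 1"
    and "f analytic_on ball 0 R" and "g analytic_on ball 0 R"
    and "\<And>z. z \<in> ball 0 R \<Longrightarrow> (\<lambda>k. a k * z ^ k) sums f z"
    and "\<And>z. z \<in> ball 0 R \<Longrightarrow> (\<lambda>k. b k * z ^ k) sums g z"
    and "1 \<le> r" and "r < R"
  shows "summable (\<lambda>m. real m ^ 2 * (\<Sum>j=0..m. norm (a j) * norm (b (m - j))) * r ^ (m - 1))
    \<and> (\<forall>n::nat. n \<ge> 1 \<longrightarrow>
         disc_norm r (\<lambda>z. bernstein n (\<lambda>w. f w * g w) z - bernstein n f z * bernstein n g z)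
         \<le> 6 * (1 + r) / real n *
            (\<Sum>m. real m ^ 2 * (\<Sum>j=0..m. norm (a j) * norm (b (m - j))) * r ^ (m - 1)))"
proof -
  note R1 = assms(1) and Sa = assms(4) and Sb = assms(5) and r1 = assms(6) and rR = assms(7)
  define T where "T m = (\<Sum>j=0..m. norm (a j) * norm (b (m - j)))" for m
  define u where "u m = real m ^ 2 * T m * r ^ (m - 1)" for m
  have T0: "T m \<ge> 0" for m unfolding T_def by (intro sum_nonneg) auto
  have u0: "u m \<ge> 0" for m unfolding u_def using T0 r1 by simp
  have su: "summable u"
  proof -
    define s where "s = (r + R) / 2"
    have rs: "r < s" unfolding s_def using rR by simp
    have sR: "s < R" unfolding s_def using rR by simp
    have s0: "0 < s" using rs r1 by simp
    have ns: "norm (complex_of_real s) < R" using sR s0 by simp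
    have sa: "summable (\<lambda>p. norm (a p) * s ^ p)"
      using summ_abs[OF Sa ns] s0 by simp
    have sb: "summable (\<lambda>p. norm (b p) * s ^ p)"
      using summ_abs[OF Sb ns] s0 by simp
    have sa': "summable (\<lambda>p. norm (norm (a p) * s ^ p))" using sa s0 by simp
    have sb': "summable (\<lambda>p. norm (norm (b p) * s ^ p))" using sb s0 by simp
    have "(\<lambda>m. \<Sum>i\<le>m. norm (a i) * s ^ i * (norm (b (m - i)) * s ^ (m - i))) sums
        ((\<Sum>k. norm (a k) * s ^ k) * (\<Sum>k. norm (b k) * s ^ k))"
      by (rule Cauchy_product_sums[OF sa' sb'])
    moreover have "(\<Sum>i\<le>m. norm (a i) * s ^ i * (norm (b (m - i)) * s ^ (m - i))) = T m * s ^ m" for m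
    proof -
      have "norm (a i) * s ^ i * (norm (b (m - i)) * s ^ (m - i)) = norm (a i) * norm (b (m - i)) * s ^ m"
        if "i \<in> {..m}" for i
      proof -
        have "s ^ i * s ^ (m - i) = s ^ m" using that by (simp flip: power_add)
        then show ?thesis by (metis mult.assoc mult.left_commute)
      qed
      then have "(\<Sum>i\<le>m. norm (a i) * s ^ i * (norm (b (m - i)) * s ^ (m - i))) = (\<Sum>i\<le>m. norm (a i) * norm (b (m - i)) * s ^ m)"
        by (rule sum.cong[OF refl])
      then show ?thesis unfolding T_def by (simp add: sum_distrib_right atLeast0AtMost)
    qed
    ultimately have sT: "summable (\<lambda>m. T m * s ^ m)" by (simp add: sums_iff)
    define q where "q = r / s"
    have q0: "0 < q" and q1: "q < 1" unfolding q_def using rs s0 r1 by simp_all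
    have "norm (sqrt q) < 1" using q0 q1 by simp
    then have L: "(\<lambda>m. of_nat m * sqrt q ^ m) \<longlonglongrightarrow> (0::real)" by (rule powser_times_n_limit_0)
    have "(\<lambda>m. (of_nat m * sqrt q ^ m) * (of_nat m * sqrt q ^ m)) \<longlonglongrightarrow> (0::real) * 0"
      by (intro tendsto_mult L)
    moreover have "(of_nat m * sqrt q ^ m) * (of_nat m * sqrt q ^ m) = real m ^ 2 * q ^ m" for m
    proof -
      have "sqrt q ^ m * sqrt q ^ m = q ^ m" using q0
        by (simp flip: power_mult_distrib)
      then show ?thesis by (simp add: power2_eq_square algebra_simps)
    qed
    ultimately have "(\<lambda>m. real m ^ 2 * q ^ m) \<longlonglongrightarrow> 0" by simp
    then have "Bseq (\<lambda>m. real m ^ 2 * q ^ m)" by (intro convergent_imp_Bseq convergentI)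
    then obtain K where "\<forall>m. norm (real m ^ 2 * q ^ m) \<le> K" using BseqD by blast
    then have K: "\<And>m. norm (real m ^ 2 * q ^ m) \<le> K" by blast
    have "norm (u m) \<le> K * (T m * s ^ m)" for m
    proof -
      have "r ^ (m - 1) \<le> r ^ m" using r1 by (intro power_increasing) auto
      then have "u m \<le> real m ^ 2 * T m * r ^ m" unfolding u_def using T0[of m]
        by (intro mult_left_mono) auto
      also have "\<dots> = (real m ^ 2 * q ^ m) * (T m * s ^ m)"
        unfolding q_def using s0 by (simp add: power_divide)
      also have "\<dots> \<le> K * (T m * s ^ m)"
        using K[of m] T0[of m] s0 by (intro mult_right_mono) auto
      finally show ?thesis using u0[of m] by simp
    qed
    then show ?thesis
      using summable_comparison_test'[OF summable_mult[OF sT, of K], of 0 u] by blast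
  qed
  have main: "disc_norm r (\<lambda>z. bernstein n (\<lambda>w. f w * g w) z - bernstein n f z * bernstein n g z)
      \<le> 6 * (1 + r) / real n * suminf u" if n: "n \<ge> 1" for n
    unfolding disc_norm_def
  proof (rule cSUP_least)
    show "cball 0 r \<noteq> {}" using r1 by simp
  next
    fix z :: complex assume "z \<in> cball 0 r"
    then have zr: "norm z \<le> r" by simp
    define P where "P p = mom n z p" for p
    have Bf: "(\<lambda>p. a p * P p) sums bernstein n f z" unfolding P_def by (rule bern_sums[OF R1 Sa])
    have Bg: "(\<lambda>p. b p * P p) sums bernstein n g z" unfolding P_def by (rule bern_sums[OF R1 Sb])
    define c where "c m = (\<Sum>i\<le>m. a i * b (m - i))" for m
    have Bfg: "(\<lambda>m. c m * P m) sums bernstein n (\<lambda>w. f w * g w) z"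
      unfolding P_def c_def by (rule bern_sums[OF R1 prod_sums[OF Sa Sb]])
    have nr: "norm (complex_of_real r) < R" using rR r1 by simp
    have abs_a: "summable (\<lambda>p. norm (a p * P p))"
    proof (rule summable_comparison_test'[where N = 0])
      show "summable (\<lambda>p. norm (a p) * norm (complex_of_real r) ^ p)" by (rule summ_abs[OF Sa nr])
      fix p :: nat
      have "norm (P p) \<le> r ^ p" unfolding P_def by (rule mom_bounds(1)[OF n r1 zr])
      then show "norm (norm (a p * P p)) \<le> norm (a p) * norm (complex_of_real r) ^ p"
        using r1 by (simp add: norm_mult mult_left_mono)
    qed
    have abs_b: "summable (\<lambda>p. norm (b p * P p))"
    proof (rule summable_comparison_test'[where N = 0])
      show "summable (\<lambda>p. norm (b p) * norm (complex_of_real r) ^ p)" by (rule summ_abs[OF Sb nr])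
      fix p :: nat
      have "norm (P p) \<le> r ^ p" unfolding P_def by (rule mom_bounds(1)[OF n r1 zr])
      then show "norm (norm (b p * P p)) \<le> norm (b p) * norm (complex_of_real r) ^ p"
        using r1 by (simp add: norm_mult mult_left_mono)
    qed
    have "(\<lambda>m. \<Sum>i\<le>m. a i * P i * (b (m - i) * P (m - i))) sums ((\<Sum>k. a k * P k) * (\<Sum>k. b k * P k))"
      by (rule Cauchy_product_sums[OF abs_a abs_b])
    then have BfBg: "(\<lambda>m. \<Sum>i\<le>m. a i * P i * (b (m - i) * P (m - i))) sums (bernstein n f z * bernstein n g z)"
      using Bf Bg by (simp add: sums_iff)
    define d where "d m = c m * P m - (\<Sum>i\<le>m. a i * P i * (b (m - i) * P (m - i)))" for m
    have Sd: "d sums (bernstein n (\<lambda>w. f w * g w) z - bernstein n f z * bernstein n g z)"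
      unfolding d_def by (rule sums_diff[OF Bfg BfBg])
    have dm: "d m = (\<Sum>i\<le>m. a i * b (m - i) * (P m - P i * P (m - i)))" for m
    proof -
      have "(\<Sum>i\<le>m. a i * b (m - i) * (P m - P i * P (m - i)))
          = (\<Sum>i\<le>m. a i * b (m - i) * P m - a i * P i * (b (m - i) * P (m - i)))"
        by (rule sum.cong[OF refl]) (simp add: algebra_simps)
      also have "\<dots> = (\<Sum>i\<le>m. a i * b (m - i) * P m) - (\<Sum>i\<le>m. a i * P i * (b (m - i) * P (m - i)))"
        by (rule sum_subtractf)
      also have "(\<Sum>i\<le>m. a i * b (m - i) * P m) = c m * P m"
        unfolding c_def by (simp add: sum_distrib_right)
      finally show ?thesis unfolding d_def by simp
    qed
    have dle: "norm (d m) \<le> (3 * r / real n) * u m" for m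
    proof -
      have "norm (d m) \<le> (\<Sum>i\<le>m. norm (a i * b (m - i) * (P m - P i * P (m - i))))"
        unfolding dm by (rule norm_sum)
      also have "\<dots> \<le> (\<Sum>i\<le>m. norm (a i) * norm (b (m - i)) * (3 * real m ^ 2 * r ^ m / real n))"
      proof (rule sum_mono)
        fix i assume "i \<in> {..m}"
        then have "norm (P m - P i * P (m - i)) \<le> 3 * real m ^ 2 * r ^ m / real n"
          unfolding P_def by (intro D_bound[OF n r1 zr]) simp
        then show "norm (a i * b (m - i) * (P m - P i * P (m - i))) \<le> norm (a i) * norm (b (m - i)) * (3 * real m ^ 2 * r ^ m / real n)"
          unfolding norm_mult by (intro mult_left_mono) auto
      qed
      also have "\<dots> = T m * (3 * real m ^ 2 * r ^ m / real n)"
        unfolding T_def atLeast0AtMost by (rule sum_distrib_right[symmetric])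
      also have "\<dots> = (3 * r / real n) * u m"
      proof (cases m)
        case 0 then show ?thesis unfolding u_def by simp
      next
        case (Suc k) then show ?thesis unfolding u_def by (simp add: algebra_simps)
      qed
      finally show ?thesis .
    qed
    have "norm (bernstein n (\<lambda>w. f w * g w) z - bernstein n f z * bernstein n g z) = norm (suminf d)"
      using Sd by (simp add: sums_iff)
    also have "\<dots> \<le> (\<Sum>m. (3 * r / real n) * u m)"
      by (rule norm_suminf_le[OF dle summable_mult[OF su]])
    also have "\<dots> = (3 * r / real n) * suminf u" by (rule suminf_mult[OF su])
    also have "\<dots> \<le> 6 * (1 + r) / real n * suminf u"
    proof (rule mult_right_mono)
      show "3 * r / real n \<le> 6 * (1 + r) / real n" using r1 by (intro divide_right_mono) auto
      show "0 \<le> suminf u" using su u0 by (rule suminf_nonneg)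
    qed
    finally show "norm (bernstein n (\<lambda>w. f w * g w) z - bernstein n f z * bernstein n g z) \<le> 6 * (1 + r) / real n * suminf u" .
  qed
  show ?thesis using su main unfolding u_def T_def by blast
qed

end
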